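(* Let $s=0$, $\lambda\in\mathbb{C}$ and $k\in\mathbb{Z}\setminus\{0\}$. Every even superderivation of $\mathfrak{L}^0_\lambda$ of degree $k$ is inner; more precisely, it equals $\mathrm{ad}(aL_k+bI_k)$ for some $a,b\in\mathbb{C}$.
   Context: For $s\in\{0,\tfrac12\}$ and $\lambda\in\mathbb{C}$, $\mathfrak{L}^s_\lambda$ is the complex Lie superalgebra with basis $\{L_m,I_m,G_p,H_p : m\in\mathbb{Z},\ p\in s+\mathbb{Z}\}$, even part spanned by the $L_m,I_m$, odd part spanned by the $G_p,H_p$, and brackets $[L_m,L_n]=(m-n)L_{m+n}$, $[L_m,I_n]=(m-n)I_{m+n}$, $[L_m,H_p]=(\tfrac m2-p)H_{m+p}$, $[L_m,G_p]=(\tfrac m2-p)G_{m+p}+\lambda(m+1)H_{m+p}$, $[I_m,G_p]=(m-2p)H_{m+p}$, $[G_p,G_q]=I_{p+q}$, plus those given by super-antisymmetry $[y,x]=-(-1)^{|x||y|}[x,y]$; all other brackets of basis elements are zero. The algebra is graded by $\tfrac12\mathbb{Z}$: $\mathfrak{L}_r$ is spanned by the basis elements with index $r$. A superderivation of parity $a$ is a linear map $D$ shifting parity by $a$ with $D([x,y])=[D(x),y]+(-1)^{a|x|}[x,D(y)]$ for homogeneous $x,y$; it has degree $r$ if $D(\mathfrak{L}_q)\subset\mathfrak{L}_{q+r}$ for all $q$. $\mathrm{ad}\,x(y)=[x,y]$. *)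

theory Defs
  imports Complex_Main
begin

text \<open>Basis of the Lie superalgebra L^0_lambda (s = 0, so odd indices p are integers).\<close>
datatype basis = L int | I int | G int | H int

text \<open>Elements are finitely supported coefficient functions on the basis.\<close>
type_synonym elem = "basis \<Rightarrow> complex"

definition supp :: "elem \<Rightarrow> basis set" where
  "supp x = {b. x b \<noteq> 0}"

definition Alg :: "elem set" where
  "Alg = {x. finite (supp x)}"

definition unit_vec :: "basis \<Rightarrow> elem" where
  "unit_vec b = (\<lambda>c. if c = b then 1 else 0)"

fun idx :: "basis \<Rightarrow> int" where
  "idx (L m) = m" | "idx (I m) = m" | "idx (G p) = p" | "idx (H p) = p"

fun is_odd_b :: "basis \<Rightarrow> bool" where
  "is_odd_b (L _) = False" | "is_odd_b (I _) = False"
| "is_odd_b (G _) = True" | "is_odd_b (H _) = True"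

text \<open>Brackets of basis elements (including those obtained by super-antisymmetry).\<close>
fun bb :: "complex \<Rightarrow> basis \<Rightarrow> basis \<Rightarrow> elem" where
  "bb lam (L m) (L n) = (\<lambda>c. of_int (m - n) * unit_vec (L (m + n)) c)"
| "bb lam (L m) (I n) = (\<lambda>c. of_int (m - n) * unit_vec (I (m + n)) c)"
| "bb lam (I n) (L m) = (\<lambda>c. - of_int (m - n) * unit_vec (I (m + n)) c)"
| "bb lam (L m) (H p) = (\<lambda>c. (of_int m / 2 - of_int p) * unit_vec (H (m + p)) c)"
| "bb lam (H p) (L m) = (\<lambda>c. - (of_int m / 2 - of_int p) * unit_vec (H (m + p)) c)"
| "bb lam (L m) (G p) = (\<lambda>c. (of_int m / 2 - of_int p) * unit_vec (G (m + p)) c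
                          + lam * of_int (m + 1) * unit_vec (H (m + p)) c)"
| "bb lam (G p) (L m) = (\<lambda>c. - ((of_int m / 2 - of_int p) * unit_vec (G (m + p)) c
                          + lam * of_int (m + 1) * unit_vec (H (m + p)) c))"
| "bb lam (I m) (G p) = (\<lambda>c. of_int (m - 2 * p) * unit_vec (H (m + p)) c)"
| "bb lam (G p) (I m) = (\<lambda>c. - of_int (m - 2 * p) * unit_vec (H (m + p)) c)"
| "bb lam (G p) (G q) = unit_vec (I (p + q))"
| "bb lam _ _ = (\<lambda>c. 0)"

definition br :: "complex \<Rightarrow> elem \<Rightarrow> elem \<Rightarrow> elem" where
  "br lam x y = (\<lambda>c. \<Sum>a\<in>supp x. \<Sum>b\<in>supp y. x a * y b * bb lam a b c)"

definition homog :: "bool \<Rightarrow> elem \<Rightarrow> bool" where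
  "homog par x \<longleftrightarrow> x \<in> Alg \<and> (\<forall>b\<in>supp x. is_odd_b b = par)"

definition graded :: "int \<Rightarrow> elem set" where
  "graded q = {x \<in> Alg. \<forall>b\<in>supp x. idx b = q}"

definition linear_on_Alg :: "(elem \<Rightarrow> elem) \<Rightarrow> bool" where
  "linear_on_Alg D \<longleftrightarrow> (\<forall>x\<in>Alg. D x \<in> Alg)
     \<and> (\<forall>x\<in>Alg. \<forall>y\<in>Alg. D (\<lambda>b. x b + y b) = (\<lambda>b. D x b + D y b))
     \<and> (\<forall>c. \<forall>x\<in>Alg. D (\<lambda>b. c * x b) = (\<lambda>b. c * D x b))"

definition superderivation :: "complex \<Rightarrow> bool \<Rightarrow> (elem \<Rightarrow> elem) \<Rightarrow> bool" where
  "superderivation lam par D \<longleftrightarrow> linear_on_Alg D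
     \<and> (\<forall>px x. homog px x \<longrightarrow> homog (px \<noteq> par) (D x))
     \<and> (\<forall>px py x y. homog px x \<longrightarrow> homog py y \<longrightarrow>
          D (br lam x y) = (\<lambda>c. br lam (D x) y c + (if par \<and> px then -1 else 1) * br lam x (D y) c))"

definition has_degree :: "int \<Rightarrow> (elem \<Rightarrow> elem) \<Rightarrow> bool" where
  "has_degree r D \<longleftrightarrow> (\<forall>q. \<forall>x\<in>graded q. D x \<in> graded (q + r))"

end

theory Submission
  imports Defs
begin

lemma supp_e[simp]: "supp (unit_vec b) = {b}" by (auto simp: supp_def unit_vec_def)
lemma e_Alg[simp]: "unit_vec b \<in> Alg" by (simp add: Alg_def)

lemma br_sup:
  assumes "finite S" "finite T" "supp x \<subseteq> S" "supp y \<subseteq> T"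
  shows "br lam x y c = (\<Sum>a\<in>S. \<Sum>b\<in>T. x a * y b * bb lam a b c)"
proof -
  have "br lam x y c = (\<Sum>a\<in>S. \<Sum>b\<in>supp y. x a * y b * bb lam a b c)"
    unfolding br_def
    by (rule sum.mono_neutral_left) (use assms in \<open>auto simp: supp_def\<close>)
  also have "\<dots> = (\<Sum>a\<in>S. \<Sum>b\<in>T. x a * y b * bb lam a b c)"
    by (rule sum.cong[OF refl], rule sum.mono_neutral_left) (use assms in \<open>auto simp: supp_def\<close>)
  finally show ?thesis .
qed

lemma br_ee: "br lam (unit_vec a) (unit_vec b) = bb lam a b"
proof (rule ext)
  fix c
  have "br lam (unit_vec a) (unit_vec b) c = (\<Sum>a'\<in>{a}. \<Sum>b'\<in>{b}. unit_vec a a' * unit_vec b b' * bb lam a' b' c)"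
    by (rule br_sup) auto
  then show "br lam (unit_vec a) (unit_vec b) c = bb lam a b c" by (simp add: unit_vec_def)
qed

lemma sum_Alg: "finite F \<Longrightarrow> (\<lambda>c. \<Sum>y\<in>F. f y * unit_vec y c) \<in> Alg"
proof -
  assume F: "finite F"
  have "supp (\<lambda>c. \<Sum>y\<in>F. f y * unit_vec y c) \<subseteq> F"
  proof
    fix c assume "c \<in> supp (\<lambda>c. \<Sum>y\<in>F. f y * unit_vec y c)"
    hence "(\<Sum>y\<in>F. f y * unit_vec y c) \<noteq> 0" by (simp add: supp_def)
    then obtain y where "y \<in> F" "f y * unit_vec y c \<noteq> 0" by (meson sum.neutral)
    then show "c \<in> F" by (auto simp: unit_vec_def split: if_splits)
  qed
  then show ?thesis using F finite_subset unfolding Alg_def by blast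
qed

lemma decomp: "x \<in> Alg \<Longrightarrow> x = (\<lambda>c. \<Sum>y\<in>supp x. x y * unit_vec y c)"
proof (rule ext)
  fix c assume "x \<in> Alg"
  hence f: "finite (supp x)" by (simp add: Alg_def)
  have "(\<Sum>y\<in>supp x. x y * unit_vec y c) = (\<Sum>y\<in>supp x. if y = c then x c else 0)"
    by (rule sum.cong) (auto simp: unit_vec_def)
  also have "\<dots> = x c" using f by (simp add: sum.delta' supp_def)
  finally show "x c = (\<Sum>y\<in>supp x. x y * unit_vec y c)" by simp
qed

context
  fixes lam :: complex and k :: int and D :: "elem \<Rightarrow> elem"
  assumes k: "k \<noteq> 0" and sd: "superderivation lam False D" and dg: "has_degree k D"
begin

lemma lin: "linear_on_Alg D" using sd by (simp add: superderivation_def)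

lemma D_Alg: "x \<in> Alg \<Longrightarrow> D x \<in> Alg" using lin by (simp add: linear_on_Alg_def)

lemma D_sup: "D (unit_vec b) c \<noteq> 0 \<Longrightarrow> idx c = idx b + k \<and> is_odd_b c = is_odd_b b"
proof -
  assume h: "D (unit_vec b) c \<noteq> 0"
  have "homog (is_odd_b b) (unit_vec b)" by (simp add: homog_def)
  hence "homog (is_odd_b b) (D (unit_vec b))" using sd unfolding superderivation_def by simp
  hence 1: "is_odd_b c = is_odd_b b" using h unfolding homog_def supp_def by blast
  have "unit_vec b \<in> graded (idx b)" by (simp add: graded_def)
  hence "D (unit_vec b) \<in> graded (idx b + k)" using dg unfolding has_degree_def by blast
  hence "idx c = idx b + k" using h unfolding graded_def supp_def by blast
  with 1 show ?thesis by blast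
qed

lemma D_scale: "D (\<lambda>c. z * unit_vec b c) = (\<lambda>c. z * D (unit_vec b) c)"
  using lin by (simp add: linear_on_Alg_def)

lemma D_zero: "D (\<lambda>c. 0) = (\<lambda>c. 0)"
  using D_scale[of 0 "L 0"] by simp

lemma D_sum: "finite F \<Longrightarrow> D (\<lambda>c. \<Sum>y\<in>F. f y * unit_vec y c) = (\<lambda>c. \<Sum>y\<in>F. f y * D (unit_vec y) c)"
proof (induction F rule: finite_induct)
  case empty then show ?case by (simp add: D_zero)
next
  case (insert y F)
  have "D (\<lambda>c. \<Sum>y\<in>insert y F. f y * unit_vec y c)
      = D (\<lambda>c. (\<lambda>c. f y * unit_vec y c) c + (\<lambda>c. \<Sum>y\<in>F. f y * unit_vec y c) c)"
    using insert by simp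
  also have "\<dots> = (\<lambda>c. D (\<lambda>c. f y * unit_vec y c) c + D (\<lambda>c. \<Sum>y\<in>F. f y * unit_vec y c) c)"
  proof -
    have a1: "(\<lambda>c. f y * unit_vec y c) \<in> Alg" using sum_Alg[of "{y}" f] by simp
    have a2: "(\<lambda>c. \<Sum>y\<in>F. f y * unit_vec y c) \<in> Alg" using sum_Alg[OF insert(1), of f] .
    have "\<forall>x\<in>Alg. \<forall>y\<in>Alg. D (\<lambda>b. x b + y b) = (\<lambda>b. D x b + D y b)"
      using lin unfolding linear_on_Alg_def by blast
    from this[rule_format, OF a1 a2] show ?thesis by simp
  qed
  also have "\<dots> = (\<lambda>c. \<Sum>y\<in>insert y F. f y * D (unit_vec y) c)"
    using insert by (simp add: D_scale)
  finally show ?case .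
qed

lemma leib: "D (bb lam a b) = (\<lambda>c. br lam (D (unit_vec a)) (unit_vec b) c + br lam (unit_vec a) (D (unit_vec b)) c)"
proof -
  have "homog (is_odd_b a) (unit_vec a)" "homog (is_odd_b b) (unit_vec b)" by (simp_all add: homog_def)
  then have "D (br lam (unit_vec a) (unit_vec b)) = (\<lambda>c. br lam (D (unit_vec a)) (unit_vec b) c + (if False \<and> is_odd_b a then -1 else 1) * br lam (unit_vec a) (D (unit_vec b)) c)"
    using sd unfolding superderivation_def by blast
  then show ?thesis by (simp add: br_ee)
qed

lemma D_add: "x \<in> Alg \<Longrightarrow> y \<in> Alg \<Longrightarrow> D (\<lambda>c. x c + y c) = (\<lambda>c. D x c + D y c)"
  using lin unfolding linear_on_Alg_def by blast

lemma sup_ev: "\<not> is_odd_b y \<Longrightarrow> D (unit_vec y) c \<noteq> 0 \<Longrightarrow> c = L (idx y + k) \<or> c = I (idx y + k)"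
  using D_sup[of y c] by (cases c) auto

lemma sup_od: "is_odd_b y \<Longrightarrow> D (unit_vec y) c \<noteq> 0 \<Longrightarrow> c = G (idx y + k) \<or> c = H (idx y + k)"
  using D_sup[of y c] by (cases c) auto

lemma brX: "br lam (D (unit_vec (L 0))) (unit_vec y) c
   = D (unit_vec (L 0)) (L k) * bb lam (L k) y c + D (unit_vec (L 0)) (I k) * bb lam (I k) y c"
proof -
  have "supp (D (unit_vec (L 0))) \<subseteq> {L k, I k}"
    using sup_ev[of "L 0"] by (auto simp: supp_def)
  then have "br lam (D (unit_vec (L 0))) (unit_vec y) c =
     (\<Sum>a\<in>{L k, I k}. \<Sum>b\<in>{y}. D (unit_vec (L 0)) a * unit_vec y b * bb lam a b c)"
    by (intro br_sup) auto
  then show ?thesis by (simp add: unit_vec_def)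
qed

lemma brY: "supp (D (unit_vec y)) \<subseteq> {P, Q} \<Longrightarrow> P \<noteq> Q \<Longrightarrow> br lam (unit_vec (L 0)) (D (unit_vec y)) c
   = D (unit_vec y) P * bb lam (L 0) P c + D (unit_vec y) Q * bb lam (L 0) Q c"
proof -
  assume "supp (D (unit_vec y)) \<subseteq> {P, Q}" "P \<noteq> Q"
  then have "br lam (unit_vec (L 0)) (D (unit_vec y)) c =
     (\<Sum>a\<in>{L 0}. \<Sum>b\<in>{P,Q}. unit_vec (L 0) a * D (unit_vec y) b * bb lam a b c)"
    by (intro br_sup) auto
  then show ?thesis using \<open>P \<noteq> Q\<close> by (simp add: unit_vec_def)
qed

lemma suppL: "supp (D (unit_vec (L q))) \<subseteq> {L (q+k), I (q+k)}"
  using sup_ev[of "L q"] by (auto simp: supp_def)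
lemma suppI: "supp (D (unit_vec (I q))) \<subseteq> {L (q+k), I (q+k)}"
  using sup_ev[of "I q"] by (auto simp: supp_def)
lemma suppG: "supp (D (unit_vec (G q))) \<subseteq> {G (q+k), H (q+k)}"
  using sup_od[of "G q"] by (auto simp: supp_def)
lemma suppH: "supp (D (unit_vec (H q))) \<subseteq> {G (q+k), H (q+k)}"
  using sup_od[of "H q"] by (auto simp: supp_def)

lemma zero_out: "supp f \<subseteq> S \<Longrightarrow> c \<notin> S \<Longrightarrow> f c = 0"
  by (auto simp: supp_def)

definition "al = D (unit_vec (L 0)) (L k)"
definition "be = D (unit_vec (L 0)) (I k)"

lemma caseL: "D (unit_vec (L q)) c = al / of_int k * bb lam (L k) (L q) c + be / of_int k * bb lam (I k) (L q) c"
proof -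
  let ?Y = "D (unit_vec (L q))"
  have kk: "(of_int k :: complex) \<noteq> 0" using k by simp
  have b0: "bb lam (L 0) (L q) = (\<lambda>c. of_int (-q) * unit_vec (L q) c)" by simp
  have E: "of_int (-q) * ?Y c' = al * bb lam (L k) (L q) c' + be * bb lam (I k) (L q) c'
     + ?Y (L (q+k)) * bb lam (L 0) (L (q+k)) c' + ?Y (I (q+k)) * bb lam (L 0) (I (q+k)) c'" for c'
  proof -
    have bY: "br lam (unit_vec (L 0)) ?Y c' = ?Y (L (q+k)) * bb lam (L 0) (L (q+k)) c' + ?Y (I (q+k)) * bb lam (L 0) (I (q+k)) c'"
      by (rule brY[OF suppL]) simp
    show ?thesis
      using fun_cong[OF leib[of "L 0" "L q"], of c'] unfolding b0 D_scale brX bY al_def be_def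
      by simp
  qed
  show ?thesis
  proof (cases "c = L (q+k) \<or> c = I (q+k)")
    case True
    then show ?thesis
    proof
      assume c: "c = L (q+k)"
      have "of_int (-q) * ?Y c = al * of_int (k - q) + ?Y c * of_int (- (q+k))"
        using E[of c] c by (simp add: unit_vec_def)
      then show ?thesis using c kk by (simp add: unit_vec_def field_simps)
    next
      assume c: "c = I (q+k)"
      have "of_int (-q) * ?Y c = be * of_int (k - q) + ?Y c * of_int (- (q+k))"
        using E[of c] c by (simp add: unit_vec_def)
      then show ?thesis using c kk by (simp add: unit_vec_def field_simps)
    qed
  next
    case False
    then show ?thesis using zero_out[OF suppL, of c] by (auto simp: unit_vec_def)
  qed
qed

lemma caseI: "D (unit_vec (I q)) c = al / of_int k * bb lam (L k) (I q) c + be / of_int k * bb lam (I k) (I q) c"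
proof -
  let ?Y = "D (unit_vec (I q))"
  have kk: "(of_int k :: complex) \<noteq> 0" using k by simp
  have b0: "bb lam (L 0) (I q) = (\<lambda>c. of_int (-q) * unit_vec (I q) c)" by simp
  have E: "of_int (-q) * ?Y c' = al * bb lam (L k) (I q) c' + be * bb lam (I k) (I q) c'
     + ?Y (L (q+k)) * bb lam (L 0) (L (q+k)) c' + ?Y (I (q+k)) * bb lam (L 0) (I (q+k)) c'" for c'
  proof -
    have bY: "br lam (unit_vec (L 0)) ?Y c' = ?Y (L (q+k)) * bb lam (L 0) (L (q+k)) c' + ?Y (I (q+k)) * bb lam (L 0) (I (q+k)) c'"
      by (rule brY[OF suppI]) simp
    show ?thesis
      using fun_cong[OF leib[of "L 0" "I q"], of c'] unfolding b0 D_scale brX bY al_def be_def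
      by simp
  qed
  show ?thesis
  proof (cases "c = L (q+k) \<or> c = I (q+k)")
    case True
    then show ?thesis
    proof
      assume c: "c = L (q+k)"
      have "of_int (-q) * ?Y c = ?Y c * of_int (- (q+k))"
        using E[of c] c by (simp add: unit_vec_def)
      then show ?thesis using c kk by (simp add: unit_vec_def field_simps)
    next
      assume c: "c = I (q+k)"
      have "of_int (-q) * ?Y c = al * of_int (k - q) + ?Y c * of_int (- (q+k))"
        using E[of c] c by (simp add: unit_vec_def)
      then show ?thesis using c kk by (simp add: unit_vec_def field_simps)
    qed
  next
    case False
    then show ?thesis using zero_out[OF suppI, of c] by (auto simp: unit_vec_def)
  qed
qed

lemma caseH: "D (unit_vec (H q)) c = al / of_int k * bb lam (L k) (H q) c + be / of_int k * bb lam (I k) (H q) c"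
proof -
  let ?Y = "D (unit_vec (H q))"
  have kk: "(of_int k :: complex) \<noteq> 0" using k by simp
  have b0: "bb lam (L 0) (H q) = (\<lambda>c. of_int (-q) * unit_vec (H q) c)" by simp
  have E: "of_int (-q) * ?Y c' = al * bb lam (L k) (H q) c' + be * bb lam (I k) (H q) c'
     + ?Y (G (q+k)) * bb lam (L 0) (G (q+k)) c' + ?Y (H (q+k)) * bb lam (L 0) (H (q+k)) c'" for c'
  proof -
    have bY: "br lam (unit_vec (L 0)) ?Y c' = ?Y (G (q+k)) * bb lam (L 0) (G (q+k)) c' + ?Y (H (q+k)) * bb lam (L 0) (H (q+k)) c'"
      by (rule brY[OF suppH]) simp
    show ?thesis
      using fun_cong[OF leib[of "L 0" "H q"], of c'] unfolding b0 D_scale brX bY al_def be_def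
      by simp
  qed
  have "of_int (-q) * ?Y (G (q+k)) = ?Y (G (q+k)) * of_int (- (q+k))"
    using E[of "G (q+k)"] by (simp add: unit_vec_def)
  hence YG: "?Y (G (q+k)) = 0" using kk by (simp add: algebra_simps)
  show ?thesis
  proof (cases "c = G (q+k) \<or> c = H (q+k)")
    case True
    then show ?thesis
    proof
      assume c: "c = G (q+k)"
      then show ?thesis using YG by (simp add: unit_vec_def)
    next
      assume c: "c = H (q+k)"
      have "of_int (-q) * ?Y c = al * (of_int k / 2 - of_int q) + ?Y c * (- of_int (q+k))"
        using E[of c] c YG by (simp add: unit_vec_def)
      then show ?thesis using c kk by (simp add: unit_vec_def field_simps)
    qed
  next
    case False
    then show ?thesis using zero_out[OF suppH, of c] by (auto simp: unit_vec_def)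
  qed
qed

lemma caseG: "D (unit_vec (G q)) c = al / of_int k * bb lam (L k) (G q) c + be / of_int k * bb lam (I k) (G q) c"
proof -
  let ?Y = "D (unit_vec (G q))"
  let ?Z = "D (unit_vec (H q))"
  have kk: "(of_int k :: complex) \<noteq> 0" using k by simp
  have b0: "bb lam (L 0) (G q) = (\<lambda>c. of_int (-q) * unit_vec (G q) c + lam * unit_vec (H q) c)" by simp
  have a1: "(\<lambda>c. of_int (-q) * unit_vec (G q) c) \<in> Alg" using sum_Alg[of "{G q}" "\<lambda>_. of_int (-q)"] by simp
  have a2: "(\<lambda>c. lam * unit_vec (H q) c) \<in> Alg" using sum_Alg[of "{H q}" "\<lambda>_. lam"] by simp
  have Db: "D (bb lam (L 0) (G q)) = (\<lambda>c. of_int (-q) * ?Y c + lam * ?Z c)"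
    unfolding b0 D_add[OF a1 a2] D_scale ..
  have E: "of_int (-q) * ?Y c' + lam * ?Z c' = al * bb lam (L k) (G q) c' + be * bb lam (I k) (G q) c'
     + ?Y (G (q+k)) * bb lam (L 0) (G (q+k)) c' + ?Y (H (q+k)) * bb lam (L 0) (H (q+k)) c'" for c'
  proof -
    have bY: "br lam (unit_vec (L 0)) ?Y c' = ?Y (G (q+k)) * bb lam (L 0) (G (q+k)) c' + ?Y (H (q+k)) * bb lam (L 0) (H (q+k)) c'"
      by (rule brY[OF suppG]) simp
    show ?thesis
      using fun_cong[OF leib[of "L 0" "G q"], of c'] unfolding Db brX bY al_def be_def
      by simp
  qed
  have ZG: "?Z c' = 0" if "c' \<noteq> H (q+k)" for c'
    using caseH[of q c'] that by (auto simp: unit_vec_def)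
  have ZH: "?Z (H (q+k)) = al / of_int k * (of_int k / 2 - of_int q)"
    using caseH[of q "H (q+k)"] by (simp add: unit_vec_def)
  have YG: "?Y (G (q+k)) = al / of_int k * (of_int k / 2 - of_int q)"
  proof -
    have "of_int (-q) * ?Y (G (q+k)) = al * (of_int k / 2 - of_int q) + ?Y (G (q+k)) * (- of_int (q+k))"
      using E[of "G (q+k)"] ZG[of "G (q+k)"] by (simp add: unit_vec_def)
    then show ?thesis using kk by (simp add: field_simps)
  qed
  show ?thesis
  proof (cases "c = G (q+k) \<or> c = H (q+k)")
    case True
    then show ?thesis
    proof
      assume c: "c = G (q+k)"
      then show ?thesis using YG by (simp add: unit_vec_def)
    next
      assume c: "c = H (q+k)"
      have "of_int (-q) * ?Y c + lam * ?Z c = al * (lam * of_int (k+1)) + be * of_int (k - 2*q)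
           + ?Y (G (q+k)) * lam + ?Y c * (- of_int (q+k))"
        using E[of c] c by (simp add: unit_vec_def)
      moreover have "?Z c = ?Y (G (q+k))" using ZH YG c by simp
      ultimately have "of_int k * ?Y c = al * (lam * of_int (k+1)) + be * of_int (k - 2*q)"
        by (simp add: algebra_simps)
      hence Yv: "?Y (H (q+k)) = (al * (lam * of_int (k+1)) + be * of_int (k - 2*q)) / of_int k"
        using kk c by (simp add: eq_divide_eq mult.commute)
      show ?thesis unfolding c Yv using kk by (simp add: unit_vec_def field_simps)
    qed
  next
    case False
    then show ?thesis using zero_out[OF suppG, of c] by (auto simp: unit_vec_def)
  qed
qed

lemma brA: "br lam (\<lambda>c. u * unit_vec (L k) c + v * unit_vec (I k) c) x c
   = (\<Sum>a\<in>{L k, I k}. \<Sum>b\<in>supp x. (u * unit_vec (L k) a + v * unit_vec (I k) a) * x b * bb lam a b c)"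
  if "x \<in> Alg"
  by (rule br_sup) (use that in \<open>auto simp: Alg_def supp_def unit_vec_def\<close>)

lemma brAe: "br lam A (unit_vec y) c = (\<Sum>a\<in>{L k, I k}. A a * bb lam a y c)"
  if "supp A \<subseteq> {L k, I k}"
proof -
  have "br lam A (unit_vec y) c = (\<Sum>a\<in>{L k, I k}. \<Sum>b\<in>{y}. A a * unit_vec y b * bb lam a b c)"
    by (rule br_sup) (use that in auto)
  also have "\<dots> = (\<Sum>a\<in>{L k, I k}. A a * bb lam a y c)" by (simp add: unit_vec_def)
  finally show ?thesis .
qed

lemma suppA: "supp (\<lambda>c. u * unit_vec (L k) c + v * unit_vec (I k) c) \<subseteq> {L k, I k}"
  by (auto simp: supp_def unit_vec_def)

lemma basis_case: "D (unit_vec y) c = br lam (\<lambda>c. al / of_int k * unit_vec (L k) c + be / of_int k * unit_vec (I k) c) (unit_vec y) c"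
proof -
  have u1: "unit_vec b b = 1" "a \<noteq> b \<Longrightarrow> unit_vec a b = 0" for a b :: basis by (simp_all add: unit_vec_def)
  show ?thesis
    unfolding brAe[OF suppA] by (cases y) (simp_all only: u1 caseL caseI caseG caseH, simp_all add: u1)
qed

lemma final: "x \<in> Alg \<Longrightarrow> D x = br lam (\<lambda>c. al / of_int k * unit_vec (L k) c + be / of_int k * unit_vec (I k) c) x"
proof (rule ext)
  fix c assume x: "x \<in> Alg"
  let ?A = "\<lambda>c. al / of_int k * unit_vec (L k) c + be / of_int k * unit_vec (I k) c"
  have f: "finite (supp x)" using x by (simp add: Alg_def)
  have "D x c = (\<Sum>y\<in>supp x. x y * D (unit_vec y) c)"
    using D_sum[OF f, of x] decomp[OF x] by metis
  also have "\<dots> = (\<Sum>y\<in>supp x. x y * br lam ?A (unit_vec y) c)"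
    by (rule sum.cong[OF refl]) (simp only: basis_case)
  also have "\<dots> = (\<Sum>y\<in>supp x. x y * (\<Sum>a\<in>{L k, I k}. ?A a * bb lam a y c))"
    by (rule sum.cong[OF refl]) (simp only: brAe[OF suppA])
  also have "\<dots> = (\<Sum>a\<in>{L k, I k}. \<Sum>y\<in>supp x. ?A a * x y * bb lam a y c)"
    by (subst sum.swap) (simp add: sum_distrib_left distrib_left mult_ac sum.distrib)
  also have "\<dots> = br lam ?A x c" unfolding brA[OF x] ..
  finally show "D x c = br lam ?A x c" .
qed

end

theorem lemma2p2:
  fixes lam :: complex and k :: int and D :: "elem \<Rightarrow> elem"
  assumes "k \<noteq> 0"
    and "superderivation lam False D"
    and "has_degree k D"
  shows "\<exists>a b :: complex. \<forall>x\<in>Alg.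
           D x = br lam (\<lambda>c. a * unit_vec (L k) c + b * unit_vec (I k) c) x"
  using final[OF assms] by blast

end
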